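(* Let $W(T,Y)$ be a $W$-product of a semilattice $Y$ by a monoid $T$. Then $W(T,Y)$ is an $F$-restriction semigroup if and only if $Y$ has an identity (greatest element), if and only if $W(T,Y)$ is a monoid.
   Context: $W$-product: $T$ is a monoid acting on the left on the semilattice $Y$ (written $t*y$) by order-embeddings such that each range $t*Y$ is an order ideal of $Y$; $W(T,Y)=\{(t*y,t)\colon y\in Y,t\in T\}$ with $(t*y,t)(s*x,s)=(t*y\wedge(ts)*x,ts)$, $(t*y,t)^*=(y,1)$, $(t*y,t)^+=(t*y,1)$. It is a restriction semigroup (an algebra $(S,\cdot,{}^*,{}^+)$ satisfying $xx^*=x$, $x^*y^*=y^*x^*$, $(xy^* )^*=x^*y^*$, $x^*y=y(xy)^*$ and the duals for ${}^+$, $(x^+)^*=x^+$, $(x^* )^+=x^*$). A restriction semigroup is $F$-restriction if every class of the least congruence $\sigma$ identifying all projections $x^*$ has a maximum element in the natural partial order ($a\le b$ iff $a=eb$ for some projection $e$). *)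

theory Defs
  imports Main
begin

definition restriction_semigroup ::
  "'a set \<Rightarrow> ('a \<Rightarrow> 'a \<Rightarrow> 'a) \<Rightarrow> ('a \<Rightarrow> 'a) \<Rightarrow> ('a \<Rightarrow> 'a) \<Rightarrow> bool" where
  "restriction_semigroup S m st pl \<longleftrightarrow>
     (\<forall>x\<in>S. \<forall>y\<in>S. m x y \<in> S) \<and> (\<forall>x\<in>S. st x \<in> S) \<and> (\<forall>x\<in>S. pl x \<in> S) \<and>
     (\<forall>x\<in>S. \<forall>y\<in>S. \<forall>z\<in>S. m (m x y) z = m x (m y z)) \<and>
     (\<forall>x\<in>S. m x (st x) = x) \<and>
     (\<forall>x\<in>S. \<forall>y\<in>S. m (st x) (st y) = m (st y) (st x)) \<and>
     (\<forall>x\<in>S. \<forall>y\<in>S. st (m x (st y)) = m (st x) (st y)) \<and>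
     (\<forall>x\<in>S. \<forall>y\<in>S. m (st x) y = m y (st (m x y))) \<and>
     (\<forall>x\<in>S. m (pl x) x = x) \<and>
     (\<forall>x\<in>S. \<forall>y\<in>S. m (pl x) (pl y) = m (pl y) (pl x)) \<and>
     (\<forall>x\<in>S. \<forall>y\<in>S. pl (m (pl y) x) = m (pl y) (pl x)) \<and>
     (\<forall>x\<in>S. \<forall>y\<in>S. m y (pl x) = m (pl (m y x)) y) \<and>
     (\<forall>x\<in>S. st (pl x) = pl x) \<and>
     (\<forall>x\<in>S. pl (st x) = st x)"

definition projections :: "'a set \<Rightarrow> ('a \<Rightarrow> 'a) \<Rightarrow> 'a set" where
  "projections S st = st ` S"

definition rcongruence ::
  "'a set \<Rightarrow> ('a \<Rightarrow> 'a \<Rightarrow> 'a) \<Rightarrow> ('a \<Rightarrow> 'a) \<Rightarrow> ('a \<Rightarrow> 'a) \<Rightarrow> ('a \<times> 'a) set \<Rightarrow> bool" where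
  "rcongruence S m st pl \<rho> \<longleftrightarrow> equiv S \<rho> \<and>
     (\<forall>a b c. (a, b) \<in> \<rho> \<longrightarrow> c \<in> S \<longrightarrow> (m a c, m b c) \<in> \<rho> \<and> (m c a, m c b) \<in> \<rho>) \<and>
     (\<forall>a b. (a, b) \<in> \<rho> \<longrightarrow> (st a, st b) \<in> \<rho> \<and> (pl a, pl b) \<in> \<rho>)"

definition sigma_rel ::
  "'a set \<Rightarrow> ('a \<Rightarrow> 'a \<Rightarrow> 'a) \<Rightarrow> ('a \<Rightarrow> 'a) \<Rightarrow> ('a \<Rightarrow> 'a) \<Rightarrow> ('a \<times> 'a) set" where
  "sigma_rel S m st pl = \<Inter>{\<rho>. rcongruence S m st pl \<rho> \<and>
       projections S st \<times> projections S st \<subseteq> \<rho>}"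

definition natural_le :: "'a set \<Rightarrow> ('a \<Rightarrow> 'a \<Rightarrow> 'a) \<Rightarrow> ('a \<Rightarrow> 'a) \<Rightarrow> 'a \<Rightarrow> 'a \<Rightarrow> bool" where
  "natural_le S m st a b \<longleftrightarrow> (\<exists>e\<in>projections S st. a = m e b)"

definition F_restriction ::
  "'a set \<Rightarrow> ('a \<Rightarrow> 'a \<Rightarrow> 'a) \<Rightarrow> ('a \<Rightarrow> 'a) \<Rightarrow> ('a \<Rightarrow> 'a) \<Rightarrow> bool" where
  "F_restriction S m st pl \<longleftrightarrow> restriction_semigroup S m st pl \<and>
     (\<forall>a\<in>S. \<exists>u\<in>S. (a, u) \<in> sigma_rel S m st pl \<and>
        (\<forall>b\<in>S. (a, b) \<in> sigma_rel S m st pl \<longrightarrow> natural_le S m st b u))"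

definition is_monoid :: "'a set \<Rightarrow> ('a \<Rightarrow> 'a \<Rightarrow> 'a) \<Rightarrow> bool" where
  "is_monoid S m \<longleftrightarrow> (\<forall>x\<in>S. \<forall>y\<in>S. m x y \<in> S) \<and>
     (\<forall>x\<in>S. \<forall>y\<in>S. \<forall>z\<in>S. m (m x y) z = m x (m y z)) \<and>
     (\<exists>e\<in>S. \<forall>x\<in>S. m e x = x \<and> m x e = x)"

definition W_action :: "('t::monoid_mult \<Rightarrow> 'y::semilattice_inf \<Rightarrow> 'y) \<Rightarrow> bool" where
  "W_action act \<longleftrightarrow>
     (\<forall>y. act 1 y = y) \<and>
     (\<forall>s t y. act (s * t) y = act s (act t y)) \<and>
     (\<forall>t x y. x \<le> y \<longleftrightarrow> act t x \<le> act t y) \<and>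
     (\<forall>t x y. y \<le> act t x \<longrightarrow> (\<exists>z. y = act t z))"

definition W_set :: "('t::monoid_mult \<Rightarrow> 'y::semilattice_inf \<Rightarrow> 'y) \<Rightarrow> ('y \<times> 't) set" where
  "W_set act = {(act t y, t) | y t. True}"

text \<open>(t*y,t)(s*x,s) = (t*y \<and> (ts)*x, ts); with b = s*x we have (ts)*x = t*b.\<close>
definition W_mult :: "('t::monoid_mult \<Rightarrow> 'y::semilattice_inf \<Rightarrow> 'y) \<Rightarrow> ('y \<times> 't) \<Rightarrow> ('y \<times> 't) \<Rightarrow> ('y \<times> 't)" where
  "W_mult act p q = (inf (fst p) (act (snd p) (fst q)), snd p * snd q)"

text \<open>(t*y,t)^* = (y,1); y is unique since t acts injectively.\<close>
definition W_star :: "('t::monoid_mult \<Rightarrow> 'y::semilattice_inf \<Rightarrow> 'y) \<Rightarrow> ('y \<times> 't) \<Rightarrow> ('y \<times> 't)" where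
  "W_star act p = ((THE y. fst p = act (snd p) y), 1)"

definition W_plus :: "('t::monoid_mult \<Rightarrow> 'y::semilattice_inf \<Rightarrow> 'y) \<Rightarrow> ('y \<times> 't) \<Rightarrow> ('y \<times> 't)" where
  "W_plus act p = (fst p, 1)"

end

theory Submission
  imports Defs
begin

lemma WA:
  assumes "W_action act"
  shows "act 1 y = y" "act (s*t) y = act s (act t y)" "(x \<le> y) = (act t x \<le> act t y)"
  using assms unfolding W_action_def by blast+

lemma WA_ideal:
  assumes "W_action act" "y \<le> act t x" obtains z where "y = act t z"
  using assms unfolding W_action_def by blast

lemma act_inj:
  assumes "W_action act" "act t x = act t y" shows "x = y"
  using WA(3)[OF assms(1), of x y t] WA(3)[OF assms(1), of y x t] assms(2)
  by (simp add: order_antisym)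

lemma act_inf:
  assumes A: "W_action act" shows "act t (inf x z) = inf (act t x) (act t z)"
proof (rule order_antisym)
  show "act t (inf x z) \<le> inf (act t x) (act t z)"
    using WA(3)[OF A] by (metis inf.cobounded1 inf.cobounded2 le_inf_iff)
next
  have "inf (act t x) (act t z) \<le> act t x" by simp
  then obtain w where w: "inf (act t x) (act t z) = act t w" using WA_ideal[OF A] by metis
  have "w \<le> x" "w \<le> z" using WA(3)[OF A] w by (metis inf.cobounded1 inf.cobounded2)+
  hence "w \<le> inf x z" by simp
  thus "inf (act t x) (act t z) \<le> act t (inf x z)" using w WA(3)[OF A] by metis
qed

lemma star_eq:
  assumes A: "W_action act" shows "W_star act (act t y, t) = (y, 1)"
  unfolding W_star_def using act_inj[OF A] by (auto intro!: the_equality)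

lemma star1:
  assumes A: "W_action act" shows "W_star act (a, 1) = (a, 1)"
  using star_eq[OF A, of 1 a] WA(1)[OF A] by simp

lemma mem: "(p \<in> W_set act) = (\<exists>y. fst p = act (snd p) y)"
  unfolding W_set_def by (cases p) auto

lemma Wset_cases:
  assumes "p \<in> W_set act" obtains t y where "p = (act t y, t)"
  using assms unfolding W_set_def by blast

lemma Wset_in: "(act t y, t) \<in> W_set act"
  unfolding W_set_def by blast

lemma Wset_in1: "W_action act \<Longrightarrow> (a, 1) \<in> W_set act"
  using Wset_in[of act 1 a] WA(1) by metis

lemma rs:
  assumes A: "W_action act"
  shows "restriction_semigroup (W_set act) (W_mult act) (W_star act) (W_plus act)"
proof -
  note a1 = WA(1)[OF A] and am = WA(2)[OF A] and ai = act_inf[OF A] and se = star_eq[OF A]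
  have c1: "W_mult act (act t y, t) (act s x, s) \<in> W_set act" for t y s x
  proof -
    have "inf y (act s x) \<le> act s x" by simp
    then obtain w where w: "inf y (act s x) = act s w" using WA_ideal[OF A] by metis
    have "W_mult act (act t y, t) (act s x, s) = (act (t*s) w, t*s)"
      unfolding W_mult_def using ai[of t y "act s x"] w am by simp
    thus ?thesis using Wset_in by metis
  qed
  have c4: "W_mult act (W_mult act (act t y, t) (act s x, s)) (act r z, r)
     = W_mult act (act t y, t) (W_mult act (act s x, s) (act r z, r))" for t y s x r z
    unfolding W_mult_def by (simp add: ai am inf_assoc mult.assoc)
  have c7: "W_star act (W_mult act (act t y, t) (W_star act (act s x, s)))
      = W_mult act (W_star act (act t y, t)) (W_star act (act s x, s))" for t y s x
  proof -
    have "W_mult act (act t y, t) (W_star act (act s x, s)) = (act t (inf y x), t)"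
      unfolding W_mult_def using se ai by simp
    thus ?thesis using se unfolding W_mult_def by (simp add: a1)
  qed
  have c8: "W_mult act (W_star act (act t y, t)) (act s x, s)
      = W_mult act (act s x, s) (W_star act (W_mult act (act t y, t) (act s x, s)))" for t y s x
  proof -
    have "inf y (act s x) \<le> act s x" by simp
    then obtain w where w: "inf y (act s x) = act s w" using WA_ideal[OF A] by metis
    have wx: "w \<le> x" using w WA(3)[OF A] by (metis inf.cobounded2)
    have "W_mult act (act t y, t) (act s x, s) = (act (t*s) w, t*s)"
      unfolding W_mult_def using ai[of t y "act s x"] w am by simp
    hence "W_star act (W_mult act (act t y, t) (act s x, s)) = (w, 1)" using se by simp
    moreover have "inf (act s x) (act s w) = act s w" using wx WA(3)[OF A]
      by (metis inf.absorb2)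
    ultimately show ?thesis unfolding W_mult_def using se w a1 by simp
  qed
  show ?thesis
    unfolding restriction_semigroup_def
    apply (intro conjI)
    subgoal by (auto elim!: Wset_cases simp: c1)
    subgoal by (auto elim!: Wset_cases simp: se Wset_in1[OF A])
    subgoal by (auto elim!: Wset_cases simp: W_plus_def Wset_in1[OF A])
    subgoal by (auto elim!: Wset_cases simp: c4)
    subgoal by (auto elim!: Wset_cases simp: se W_mult_def)
    subgoal by (auto elim!: Wset_cases simp: se W_mult_def a1 inf_commute)
    subgoal by (auto elim!: Wset_cases simp: c7)
    subgoal by (auto elim!: Wset_cases simp: c8)
    subgoal by (auto elim!: Wset_cases simp: W_plus_def W_mult_def a1)
    subgoal by (auto elim!: Wset_cases simp: W_plus_def W_mult_def a1 inf_commute)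
    subgoal by (auto elim!: Wset_cases simp: W_plus_def W_mult_def a1)
    subgoal by (auto elim!: Wset_cases simp: W_plus_def W_mult_def a1 inf_assoc inf_commute)
    subgoal by (auto elim!: Wset_cases simp: W_plus_def star1[OF A])
    subgoal by (auto elim!: Wset_cases simp: W_plus_def se)
    done
qed


lemma proj_eq:
  fixes act :: "'t::monoid_mult \<Rightarrow> 'y::semilattice_inf \<Rightarrow> 'y"
  assumes A: "W_action act" shows "projections (W_set act) (W_star act) = {(y, 1) | y. True}"
  unfolding projections_def
proof (intro equalityI subsetI)
  fix p assume "p \<in> W_star act ` W_set act"
  then obtain q where q: "q \<in> W_set act" "p = W_star act q" by blast
  from q(1) obtain t y where "q = (act t y, t)" by (rule Wset_cases)
  thus "p \<in> {(y, 1) | y. True}" using q(2) star_eq[OF A] by simp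
next
  fix p assume "p \<in> {(y::'y, 1::'t) | y. True}"
  then obtain y where p: "p = (y, 1)" by blast
  have "p = W_star act (y, 1)" using p star1[OF A] by simp
  thus "p \<in> W_star act ` W_set act" using Wset_in1[OF A] by blast
qed

lemma proj_sigma:
  "p \<in> projections S st \<Longrightarrow> q \<in> projections S st \<Longrightarrow> (p, q) \<in> sigma_rel S m st pl"
  unfolding sigma_rel_def by blast

lemma sigma_sub:
  "rcongruence S m st pl \<rho> \<Longrightarrow> projections S st \<times> projections S st \<subseteq> \<rho> \<Longrightarrow> sigma_rel S m st pl \<subseteq> \<rho>"
  unfolding sigma_rel_def by blast

lemma top_F:
  fixes act :: "'t::monoid_mult \<Rightarrow> 'y::semilattice_inf \<Rightarrow> 'y"
  assumes A: "W_action act" and e: "\<forall>y. y \<le> (e::'y)"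
  shows "F_restriction (W_set act) (W_mult act) (W_star act) (W_plus act)"
proof -
  let ?S = "W_set act" and ?m = "W_mult act" and ?st = "W_star act" and ?pl = "W_plus act"
  let ?\<rho> = "{(p, q). p \<in> ?S \<and> q \<in> ?S \<and> snd p = snd q}"
  note PE = proj_eq[OF A]
  have cong: "rcongruence ?S ?m ?st ?pl ?\<rho>"
  proof -
    have R: "restriction_semigroup ?S ?m ?st ?pl" by (rule rs[OF A])
    have cl1: "\<forall>x\<in>?S. \<forall>y\<in>?S. ?m x y \<in> ?S"
      using R[unfolded restriction_semigroup_def] by (elim conjE)
    have cl2: "\<forall>x\<in>?S. ?st x \<in> ?S"
      using R[unfolded restriction_semigroup_def] by (elim conjE)
    have cl3: "\<forall>x\<in>?S. ?pl x \<in> ?S"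
      using R[unfolded restriction_semigroup_def] by (elim conjE)
    note cl = cl1 cl2 cl3
    have sm: "snd (?m x y) = snd x * snd y" for x y by (simp add: W_mult_def)
    have ss: "snd (?st x) = 1" "snd (?pl x) = 1" for x by (simp_all add: W_star_def W_plus_def)
    have eq: "equiv ?S ?\<rho>"
      unfolding equiv_def refl_on_def sym_def trans_def by auto
    show ?thesis unfolding rcongruence_def
    proof (intro conjI eq allI impI)
      fix a b c assume ab: "(a, b) \<in> ?\<rho>" and c: "c \<in> ?S"
      show "(?m a c, ?m b c) \<in> ?\<rho>" using ab c cl(1) sm by auto
      show "(?m c a, ?m c b) \<in> ?\<rho>" using ab c cl(1) sm by auto
    next
      fix a b assume ab: "(a, b) \<in> ?\<rho>"
      show "(?st a, ?st b) \<in> ?\<rho>" "(?pl a, ?pl b) \<in> ?\<rho>" using ab cl(2,3) ss by auto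
    qed
  qed
  have sub: "projections ?S ?st \<times> projections ?S ?st \<subseteq> ?\<rho>"
    using PE Wset_in1[OF A] by auto
  have sig: "sigma_rel ?S ?m ?st ?pl \<subseteq> ?\<rho>" by (rule sigma_sub[OF cong sub])
  show ?thesis unfolding F_restriction_def
  proof (intro conjI rs[OF A] ballI)
    fix a assume "a \<in> ?S"
    then obtain t y where a: "a = (act t y, t)" by (rule Wset_cases)
    define u where "u = (act t e, t)"
    have uS: "u \<in> ?S" unfolding u_def by (rule Wset_in)
    have ty: "act t y \<le> act t e" using e WA(3)[OF A] by metis
    have au: "a = ?m (act t y, 1) u" unfolding u_def a W_mult_def
      using ty WA(1)[OF A] by (simp add: inf.absorb1)
    have uu: "u = ?m (e, 1) u" unfolding u_def W_mult_def
      using e WA(1)[OF A] by (simp add: inf.absorb2)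
    have "(a, u) \<in> sigma_rel ?S ?m ?st ?pl"
      unfolding sigma_rel_def
    proof
      fix \<rho> assume "\<rho> \<in> {\<rho>. rcongruence ?S ?m ?st ?pl \<rho> \<and> projections ?S ?st \<times> projections ?S ?st \<subseteq> \<rho>}"
      hence c: "rcongruence ?S ?m ?st ?pl \<rho>" and s: "projections ?S ?st \<times> projections ?S ?st \<subseteq> \<rho>" by auto
      have "((act t y, 1), (e, 1)) \<in> \<rho>" using s PE by auto
      hence "(?m (act t y, 1) u, ?m (e, 1) u) \<in> \<rho>" using c uS unfolding rcongruence_def by blast
      thus "(a, u) \<in> \<rho>" using au uu by simp
    qed
    moreover have "natural_le ?S ?m ?st b u" if bS: "b \<in> ?S" and bs: "(a, b) \<in> sigma_rel ?S ?m ?st ?pl" for b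
    proof -
      obtain r x where b: "b = (act r x, r)" using bS by (rule Wset_cases)
      have "r = t" using sig bs a b by auto
      hence le: "act r x \<le> act t e" using e WA(3)[OF A] by metis
      have "b = ?m (act r x, 1) u" unfolding u_def b W_mult_def
        using le WA(1)[OF A] \<open>r = t\<close> by (simp add: inf.absorb1)
      moreover have "(act r x, 1) \<in> projections ?S ?st" using PE by auto
      ultimately show ?thesis unfolding natural_le_def by blast
    qed
    ultimately show "\<exists>u\<in>?S. (a, u) \<in> sigma_rel ?S ?m ?st ?pl \<and>
        (\<forall>b\<in>?S. (a, b) \<in> sigma_rel ?S ?m ?st ?pl \<longrightarrow> natural_le ?S ?m ?st b u)"
      using uS by blast
  qed
qed

lemma F_top:
  fixes act :: "'t::monoid_mult \<Rightarrow> 'y::semilattice_inf \<Rightarrow> 'y"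
  assumes A: "W_action act" and F: "F_restriction (W_set act) (W_mult act) (W_star act) (W_plus act)"
  shows "\<exists>e::'y. \<forall>y. y \<le> e"
proof -
  let ?S = "W_set act" and ?m = "W_mult act" and ?st = "W_star act" and ?pl = "W_plus act"
  note PE = proj_eq[OF A]
  obtain y0 :: 'y where True by simp
  have "(y0, 1) \<in> ?S" by (rule Wset_in1[OF A])
  then obtain u where uS: "u \<in> ?S" and
    mx: "\<forall>b\<in>?S. ((y0, 1), b) \<in> sigma_rel ?S ?m ?st ?pl \<longrightarrow> natural_le ?S ?m ?st b u"
    using F unfolding F_restriction_def by blast
  obtain r c where u: "u = (c, r)" by (cases u)
  have "y \<le> c" for y
  proof -
    have "((y0, 1), (y, 1)) \<in> sigma_rel ?S ?m ?st ?pl"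
      by (rule proj_sigma) (use PE in auto)
    hence "natural_le ?S ?m ?st (y, 1) u" using mx Wset_in1[OF A] by blast
    then obtain z where "(y, 1) = ?m (z, 1) u" unfolding natural_le_def PE by blast
    hence "y = inf z c" unfolding u W_mult_def using WA(1)[OF A] by simp
    thus ?thesis by simp
  qed
  thus ?thesis by blast
qed

lemma top_mon:
  fixes act :: "'t::monoid_mult \<Rightarrow> 'y::semilattice_inf \<Rightarrow> 'y"
  assumes A: "W_action act" and e: "\<forall>y. y \<le> (e::'y)"
  shows "is_monoid (W_set act) (W_mult act)"
  unfolding is_monoid_def
proof (intro conjI)
  show "\<forall>x\<in>W_set act. \<forall>y\<in>W_set act. W_mult act x y \<in> W_set act"
    using rs[OF A] unfolding restriction_semigroup_def by (elim conjE)
  show "\<forall>x\<in>W_set act. \<forall>y\<in>W_set act. \<forall>z\<in>W_set act. W_mult act (W_mult act x y) z = W_mult act x (W_mult act y z)"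
    using rs[OF A] unfolding restriction_semigroup_def by (elim conjE)
  have "\<forall>x\<in>W_set act. W_mult act (e, 1) x = x \<and> W_mult act x (e, 1) = x"
  proof
    fix x assume "x \<in> W_set act"
    then obtain t y where x: "x = (act t y, t)" by (rule Wset_cases)
    have "act t y \<le> act t e" using e WA(3)[OF A] by metis
    thus "W_mult act (e, 1) x = x \<and> W_mult act x (e, 1) = x"
      unfolding x W_mult_def using e WA(1)[OF A] by (simp add: inf.absorb1 inf.absorb2)
  qed
  thus "\<exists>u\<in>W_set act. \<forall>x\<in>W_set act. W_mult act u x = x \<and> W_mult act x u = x"
    using Wset_in1[OF A] by blast
qed

lemma mon_top:
  fixes act :: "'t::monoid_mult \<Rightarrow> 'y::semilattice_inf \<Rightarrow> 'y"
  assumes A: "W_action act" and M: "is_monoid (W_set act) (W_mult act)"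
  shows "\<exists>e::'y. \<forall>y. y \<le> e"
proof -
  obtain u where uS: "u \<in> W_set act" and id: "\<forall>x\<in>W_set act. W_mult act u x = x \<and> W_mult act x u = x"
    using M unfolding is_monoid_def by blast
  obtain c r where u: "u = (c, r)" by (cases u)
  have "y \<le> c" for y
  proof -
    have "W_mult act u (y, 1) = (y, 1)" using id Wset_in1[OF A] by blast
    hence "inf c (act r y) = y" and "r = 1" unfolding u W_mult_def by auto
    hence "inf c y = y" using WA(1)[OF A] by simp
    thus ?thesis by (metis inf.cobounded1)
  qed
  thus ?thesis by blast
qed

theorem corollary3p6:
  fixes act :: "'t::monoid_mult \<Rightarrow> 'y::semilattice_inf \<Rightarrow> 'y"
  assumes "W_action act"
  shows "(F_restriction (W_set act) (W_mult act) (W_star act) (W_plus act) \<longleftrightarrow> (\<exists>e::'y. \<forall>y. y \<le> e))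
       \<and> ((\<exists>e::'y. \<forall>y. y \<le> e) \<longleftrightarrow> is_monoid (W_set act) (W_mult act))"
  using F_top[OF assms] top_F[OF assms] top_mon[OF assms] mon_top[OF assms] by blast

end
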